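(* Let $\{x_i\}_{i\in[N]}$ be the global solution of the delayed consensus system described in the context. Then for almost all $t>2\tau$, \[ \frac{\mathrm d}{\mathrm dt}d_x(t)\le 4\int_{t-\tau}^t d_x(s-\tau)\,\mathrm ds+4\tau\int_{t-2\tau}^t\max_{l\in[N]}|\dot x_l(r)|\,\mathrm dr-N\underline a(t)d_x(t), \] where $\underline a(t):=\min_{i,j\in[N]}a_{ij}(t)$.
   Context: Let $N\ge2$, $d\ge1$ be integers, $[N]=\{1,\dots,N\}$, $0\le\sigma\le\tau$. Let $\psi:[0,\infty)\to[0,\infty)$ be continuous, nonincreasing, positive everywhere, with $\sup\psi\le1$. Given $x_i^0\in C([-\tau,0],\mathbb{R}^d)$, $\{x_i\}$ is the global solution (continuous on $[-\tau,\infty)$, continuously differentiable on $[0,\infty)$) of $\dot x_i(t)=\sum_{j\ne i}a_{ij}(t)(x_j(t-\tau)-x_i(t-\sigma))$ for $t>0$, with $a_{ij}(t)=\frac1{N-1}\psi(|x_i(t-\sigma)-x_j(t-\tau)|)$ for all $i,j\in[N]$, and $x_i=x_i^0$ on $[-\tau,0]$. $d_x(t):=\max_{i,j\in[N]}|x_i(t)-x_j(t)|$. *)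

theory Defs
  imports "HOL-Analysis.Analysis"
begin

definition diam_x :: "nat \<Rightarrow> (nat \<Rightarrow> real \<Rightarrow> 'a::euclidean_space) \<Rightarrow> real \<Rightarrow> real" where
  "diam_x N x t = Max {norm (x i t - x j t) | i j. i \<in> {1..N} \<and> j \<in> {1..N}}"

definition coupling :: "(real \<Rightarrow> real) \<Rightarrow> nat \<Rightarrow> real \<Rightarrow> real \<Rightarrow>
    (nat \<Rightarrow> real \<Rightarrow> 'a::euclidean_space) \<Rightarrow> nat \<Rightarrow> nat \<Rightarrow> real \<Rightarrow> real" where
  "coupling \<psi> N \<sigma> \<tau> x i j t = \<psi> (norm (x i (t - \<sigma>) - x j (t - \<tau>))) / (real N - 1)"

definition coupling_min :: "(real \<Rightarrow> real) \<Rightarrow> nat \<Rightarrow> real \<Rightarrow> real \<Rightarrow>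
    (nat \<Rightarrow> real \<Rightarrow> 'a::euclidean_space) \<Rightarrow> real \<Rightarrow> real" where
  "coupling_min \<psi> N \<sigma> \<tau> x t =
     Min {coupling \<psi> N \<sigma> \<tau> x i j t | i j. i \<in> {1..N} \<and> j \<in> {1..N}}"

end

theory Submission
  imports Defs
begin

lemma max_has_derivative:
  fixes f :: "'p \<Rightarrow> real \<Rightarrow> real"
  assumes fin: "finite P" and ne: "P \<noteq> {}"
    and cont: "\<And>p. p \<in> P \<Longrightarrow> continuous (at t) (f p)"
    and der: "\<And>p. p \<in> P \<Longrightarrow> f p t = Max ((\<lambda>p. f p t) ` P) \<Longrightarrow> (f p has_real_derivative c) (at t)"
  shows "((\<lambda>s. Max ((\<lambda>p. f p s) ` P)) has_real_derivative c) (at t)"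
proof -
  define F where "F = (\<lambda>s. Max ((\<lambda>p. f p s) ` P))"
  define A where "A = {p\<in>P. f p t = F t}"
  have "F t \<in> (\<lambda>p. f p t) ` P" unfolding F_def using fin ne by (intro Max_in) auto
  then obtain a where aP: "a \<in> P" and aA: "a \<in> A" unfolding A_def by auto
  have le: "f q s \<le> F s" if "q \<in> P" for q s unfolding F_def using fin that by (intro Max_ge) auto
  have ev1: "\<forall>\<^sub>F s in at t. \<forall>q\<in>P-A. f q s < f a s"
  proof (rule eventually_ball_finite)
    show "finite (P - A)" using fin by auto
    show "\<forall>q\<in>P-A. \<forall>\<^sub>F s in at t. f q s < f a s"
    proof
      fix q assume q: "q \<in> P - A"
      have "f q t < f a t" using le[of q t] q aA unfolding A_def by auto
      moreover have "((\<lambda>s. f q s - f a s) \<longlongrightarrow> f q t - f a t) (at t)"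
        using cont[of q] cont[OF aP] q by (intro tendsto_diff) (auto simp: continuous_at)
      ultimately have "\<forall>\<^sub>F s in at t. f q s - f a s < 0"
        by (intro order_tendstoD(2)) auto
      then show "\<forall>\<^sub>F s in at t. f q s < f a s" by eventually_elim auto
    qed
  qed
  have finA: "finite A" using fin unfolding A_def by auto
  have lim: "((\<lambda>s. (\<Sum>p\<in>A. \<bar>(f p s - f p t) / (s - t) - c\<bar>)) \<longlongrightarrow> 0) (at t)"
  proof -
    have "((\<lambda>s. (\<Sum>p\<in>A. \<bar>(f p s - f p t) / (s - t) - c\<bar>)) \<longlongrightarrow> (\<Sum>p\<in>A. 0)) (at t)"
    proof (intro tendsto_sum)
      fix p assume "p \<in> A"
      then have "(f p has_real_derivative c) (at t)" using der unfolding A_def F_def by auto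
      then have "((\<lambda>s. (f p s - f p t) / (s - t)) \<longlongrightarrow> c) (at t)"
        by (simp add: has_field_derivative_iff)
      then have "((\<lambda>s. (f p s - f p t) / (s - t) - c) \<longlongrightarrow> c - c) (at t)"
        by (intro tendsto_diff tendsto_const)
      then have "((\<lambda>s. (f p s - f p t) / (s - t) - c) \<longlongrightarrow> 0) (at t)" by simp
      then show "((\<lambda>s. \<bar>(f p s - f p t) / (s - t) - c\<bar>) \<longlongrightarrow> 0) (at t)"
        by (rule tendsto_rabs_zero)
    qed
    then show ?thesis by simp
  qed
  have "((\<lambda>s. (F s - F t) / (s - t) - c) \<longlongrightarrow> 0) (at t)"
  proof (rule Lim_null_comparison[OF _ lim])
    show "\<forall>\<^sub>F s in at t. norm ((F s - F t) / (s - t) - c) \<le> (\<Sum>p\<in>A. \<bar>(f p s - f p t) / (s - t) - c\<bar>)"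
      using ev1
    proof eventually_elim
      case (elim s)
      have "F s \<in> (\<lambda>p. f p s) ` P" unfolding F_def using fin ne by (intro Max_in) auto
      then obtain q where q: "q \<in> P" "F s = f q s" by auto
      have "q \<in> A"
      proof (rule ccontr)
        assume "q \<notin> A"
        then have "f q s < f a s" using elim q by auto
        with le[OF aP, of s] q show False by auto
      qed
      then have "F t = f q t" unfolding A_def by auto
      then have "norm ((F s - F t) / (s - t) - c) = \<bar>(f q s - f q t) / (s - t) - c\<bar>" using q by simp
      also have "\<dots> \<le> (\<Sum>p\<in>A. \<bar>(f p s - f p t) / (s - t) - c\<bar>)"
        using \<open>q \<in> A\<close> finA by (intro member_le_sum) auto
      finally show ?case .
    qed
  qed
  then have "((\<lambda>s. (F s - F t) / (s - t) - c + c) \<longlongrightarrow> 0 + c) (at t)"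
    by (intro tendsto_add tendsto_const)
  then have "((\<lambda>s. (F s - F t) / (s - t)) \<longlongrightarrow> c) (at t)" by simp
  then show ?thesis unfolding F_def[symmetric] by (simp add: has_field_derivative_iff)
qed

lemma isolated_zero:
  fixes h :: "real \<Rightarrow> real"
  assumes "(h has_real_derivative e) (at t)" "e \<noteq> 0" "h t = 0"
  shows "\<forall>\<^sub>F s in at t. h s \<noteq> 0"
proof -
  have "((\<lambda>s. (h s - h t) / (s - t)) \<longlongrightarrow> e) (at t)"
    using assms(1) by (simp add: has_field_derivative_iff)
  then have "\<forall>\<^sub>F s in at t. (h s - h t) / (s - t) \<noteq> 0"
    using assms(2) by (intro tendsto_imp_eventually_ne) auto
  then show ?thesis by eventually_elim (use assms(3) in auto)
qed

lemma discrete_countable: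
  fixes S :: "real set"
  assumes "\<And>t. t \<in> S \<Longrightarrow> \<forall>\<^sub>F s in at t. s \<notin> S"
  shows "countable S"
proof -
  define D where "D = - {x. x islimpt S}"
  have "open D" unfolding D_def using closed_limpts[of S] by (simp add: open_Compl)
  have SD: "S \<subseteq> D" unfolding D_def using assms islimpt_iff_eventually by auto
  have "S sparse_in D" using \<open>open D\<close> by (subst sparse_in_open) (auto simp: D_def)
  then have "countable (D \<inter> S)" using \<open>open D\<close> sparse_imp_countable by blast
  then show ?thesis using SD by (simp add: Int_absorb1)
qed

lemma norm_deriv_zero:
  fixes g :: "real \<Rightarrow> 'a::real_normed_vector"
  assumes "(g has_vector_derivative 0) (at t)" "g t = 0"
  shows "((\<lambda>s. norm (g s)) has_real_derivative 0) (at t)"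
proof -
  have "((\<lambda>y. norm ((g y - g t) - (y - t) *\<^sub>R 0) / norm (y - t)) \<longlongrightarrow> 0) (at t)"
    using assms(1) unfolding has_vector_derivative_def has_derivative_iff_norm by blast
  then have L: "((\<lambda>y. norm (g y) / \<bar>y - t\<bar>) \<longlongrightarrow> 0) (at t)" using assms(2) by simp
  have "((\<lambda>s. (norm (g s) - norm (g t)) / (s - t) - 0) \<longlongrightarrow> 0) (at t)"
    by (rule Lim_null_comparison[OF _ L]) (auto simp: assms(2) abs_divide)
  then show ?thesis by (simp add: has_field_derivative_iff)
qed

lemma deriv_zero_on_limpt:
  fixes g :: "real \<Rightarrow> 'a::real_normed_vector"
  assumes "(g has_vector_derivative u) (at t)" "t islimpt Z" "\<And>s. s \<in> Z \<Longrightarrow> g s = 0" "g t = 0"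
  shows "u = 0"
proof -
  have "((\<lambda>y. norm ((g y - g t) - (y - t) *\<^sub>R u) / norm (y - t)) \<longlongrightarrow> 0) (at t)"
    using assms(1) unfolding has_vector_derivative_def has_derivative_iff_norm by blast
  then have L: "((\<lambda>y. norm ((g y - g t) - (y - t) *\<^sub>R u) / norm (y - t)) \<longlongrightarrow> 0) (at t within Z)"
    by (rule tendsto_within_subset) auto
  have "\<forall>\<^sub>F y in at t within Z. norm ((g y - g t) - (y - t) *\<^sub>R u) / norm (y - t) = norm u"
    unfolding eventually_at_filter
  proof (rule always_eventually, intro allI impI)
    fix y assume y: "y \<noteq> t" "y \<in> Z"
    then have "y - t \<noteq> 0" by simp
    then show "norm ((g y - g t) - (y - t) *\<^sub>R u) / norm (y - t) = norm u"
      using assms(3)[OF y(2)] assms(4) by simp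
  qed
  then have L2: "((\<lambda>y. norm ((g y - g t) - (y - t) *\<^sub>R u) / norm (y - t)) \<longlongrightarrow> norm u) (at t within Z)"
  proof -
    have "((\<lambda>y. norm u) \<longlongrightarrow> norm u) (at t within Z)" by simp
    then show ?thesis using tendsto_cong[OF \<open>\<forall>\<^sub>F y in at t within Z. _ = norm u\<close>] by simp
  qed
  have "\<not> trivial_limit (at t within Z)" using assms(2) trivial_limit_within by blast
  then have "norm u = 0" using tendsto_unique[OF _ L L2] by simp
  then show ?thesis by simp
qed

lemma continuous_on_Max_fin:
  fixes f :: "'p \<Rightarrow> real \<Rightarrow> real"
  assumes "finite P" "P \<noteq> {}" "\<And>p. p \<in> P \<Longrightarrow> continuous_on S (f p)"
  shows "continuous_on S (\<lambda>s. Max ((\<lambda>p. f p s) ` P))"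
  using assms
proof (induction P rule: finite_ne_induct)
  case (singleton x)
  then show ?case by simp
next
  case (insert x F)
  have eq: "(\<lambda>s. Max ((\<lambda>p. f p s) ` insert x F)) = (\<lambda>s. max (f x s) (Max ((\<lambda>p. f p s) ` F)))"
    using insert by (auto simp: Max_insert)
  show ?case unfolding eq using insert by (intro continuous_on_max) auto
qed

lemma inner_sign1:
  fixes a b c :: "'a::real_inner"
  assumes "norm (c - b) \<le> norm (a - b)"
  shows "inner (c - a) (a - b) \<le> 0"
proof -
  have "(norm (c - b))\<^sup>2 \<le> (norm (a - b))\<^sup>2" using assms by (simp add: power_mono)
  moreover have "2 * inner (c - a) (a - b) = (norm (c - b))\<^sup>2 - (norm (c - a))\<^sup>2 - (norm (a - b))\<^sup>2"
    using dot_norm[of "c - a" "a - b"] by simp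
  moreover have "0 \<le> (norm (c - a))\<^sup>2" by simp
  ultimately show ?thesis by linarith
qed

lemma inner_sign2:
  fixes a b c :: "'a::real_inner"
  assumes "norm (c - a) \<le> norm (a - b)"
  shows "inner (c - b) (a - b) \<ge> 0"
proof -
  have "(norm (c - a))\<^sup>2 \<le> (norm (a - b))\<^sup>2" using assms by (simp add: power_mono)
  moreover have "2 * inner (c - b) (a - b) = (norm (c - b))\<^sup>2 + (norm (a - b))\<^sup>2 - (norm (c - a))\<^sup>2"
    using dot_norm_neg[of "c - b" "a - b"] by simp
  moreover have "0 \<le> (norm (c - b))\<^sup>2" by simp
  ultimately show ?thesis by linarith
qed

lemma agent_bound:
  fixes a y z :: "nat \<Rightarrow> real"
  assumes "finite K" "\<And>k. k \<in> K \<Longrightarrow> am \<le> a k" "\<And>k. k \<in> K \<Longrightarrow> 0 \<le> a k"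
    "sum a K \<le> 1" "\<And>k. k \<in> K \<Longrightarrow> y k \<le> 0" "\<And>k. k \<in> K \<Longrightarrow> z k \<le> E" "0 \<le> E"
  shows "(\<Sum>k\<in>K. a k * (y k + z k)) \<le> am * sum y K + E"
proof -
  have "(\<Sum>k\<in>K. a k * (y k + z k)) \<le> (\<Sum>k\<in>K. am * y k + a k * E)"
  proof (rule sum_mono)
    fix k assume k: "k \<in> K"
    have "a k * y k \<le> am * y k" using assms(2,5)[OF k] by (simp add: mult_right_mono_neg)
    moreover have "a k * z k \<le> a k * E" using assms(3,6)[OF k] by (simp add: mult_left_mono)
    ultimately show "a k * (y k + z k) \<le> am * y k + a k * E" by (simp add: distrib_left)
  qed
  also have "\<dots> = am * sum y K + sum a K * E" by (simp add: sum.distrib sum_distrib_left sum_distrib_right)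
  also have "\<dots> \<le> am * sum y K + E"
  proof -
    have "0 \<le> sum a K" using assms(3) by (simp add: sum_nonneg)
    then have "sum a K * E \<le> E" using assms(4,7) by (simp add: mult_left_le_one_le)
    then show ?thesis by simp
  qed
  finally show ?thesis .
qed

theorem corollary3p3:
  fixes N :: nat and \<sigma> \<tau> :: real and \<psi> :: "real \<Rightarrow> real"
    and x v :: "nat \<Rightarrow> real \<Rightarrow> 'a::euclidean_space"
  assumes N: "N \<ge> 2"
    and sig: "0 \<le> \<sigma>" "\<sigma> \<le> \<tau>"
    and psi_cont: "continuous_on {0..} \<psi>"
    and psi_mono: "\<And>r s. 0 \<le> r \<Longrightarrow> r \<le> s \<Longrightarrow> \<psi> s \<le> \<psi> r"
    and psi_pos: "\<And>r. 0 \<le> r \<Longrightarrow> \<psi> r > 0"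
    and psi_le1: "\<And>r. 0 \<le> r \<Longrightarrow> \<psi> r \<le> 1"
    and x_cont: "\<And>i. i \<in> {1..N} \<Longrightarrow> continuous_on {-\<tau>..} (x i)"
    and x_deriv: "\<And>i t. i \<in> {1..N} \<Longrightarrow> t \<ge> 0 \<Longrightarrow>
                    (x i has_vector_derivative v i t) (at t within {0..})"
    and v_cont: "\<And>i. i \<in> {1..N} \<Longrightarrow> continuous_on {0..} (v i)"
    and ode: "\<And>i t. i \<in> {1..N} \<Longrightarrow> t > 0 \<Longrightarrow>
                v i t = (\<Sum>j\<in>{1..N} - {i}. coupling \<psi> N \<sigma> \<tau> x i j t *\<^sub>R (x j (t - \<tau>) - x i (t - \<sigma>)))"
  shows "AE t in lborel. t > 2 * \<tau> \<longrightarrow>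
           (\<exists>D. (diam_x N x has_real_derivative D) (at t) \<and>
              D \<le> 4 * integral {t - \<tau>..t} (\<lambda>s. diam_x N x (s - \<tau>))
                   + 4 * \<tau> * integral {t - 2 * \<tau>..t} (\<lambda>r. Max {norm (v l r) | l. l \<in> {1..N}})
                   - real N * coupling_min \<psi> N \<sigma> \<tau> x t * diam_x N x t)"
proof -
  define I where "I = {1..N}"
  define P where "P = I \<times> I"
  define w where "w = (\<lambda>p s. x (fst p) s - x (snd p) s)"
  define f where "f = (\<lambda>p s. norm (w p s))"
  define dd where "dd = diam_x N x"
  define M where "M = (\<lambda>r. Max ((\<lambda>l. norm (v l r)) ` I))"
  have finI: "finite I" and neI: "I \<noteq> {}" and cardI: "card I = N" using N by (auto simp: I_def)
  have finP: "finite P" and neP: "P \<noteq> {}" using finI neI by (auto simp: P_def)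
  have tau: "0 \<le> \<tau>" using sig by linarith
  have dd_eq: "dd s = Max ((\<lambda>p. f p s) ` P)" for s
  proof -
    have "{norm (x i s - x j s) | i j. i \<in> {1..N} \<and> j \<in> {1..N}} = (\<lambda>p. f p s) ` P"
    proof
      show "{norm (x i s - x j s) | i j. i \<in> {1..N} \<and> j \<in> {1..N}} \<subseteq> (\<lambda>p. f p s) ` P"
      proof
        fix y assume "y \<in> {norm (x i s - x j s) | i j. i \<in> {1..N} \<and> j \<in> {1..N}}"
        then obtain i j where "i \<in> I" "j \<in> I" "y = norm (x i s - x j s)" by (auto simp: I_def)
        then show "y \<in> (\<lambda>p. f p s) ` P"
          by (intro rev_image_eqI[of "(i, j)"]) (auto simp: P_def f_def w_def)
      qed
      show "(\<lambda>p. f p s) ` P \<subseteq> {norm (x i s - x j s) | i j. i \<in> {1..N} \<and> j \<in> {1..N}}"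
      proof
        fix y assume "y \<in> (\<lambda>p. f p s) ` P"
        then obtain i j where "i \<in> I" "j \<in> I" "y = norm (x i s - x j s)"
          by (auto simp: P_def f_def w_def)
        then show "y \<in> {norm (x i s - x j s) | i j. i \<in> {1..N} \<and> j \<in> {1..N}}"
          unfolding I_def by blast
      qed
    qed
    then show ?thesis by (simp add: dd_def diam_x_def)
  qed
  have dd_fun: "dd = (\<lambda>s. Max ((\<lambda>p. f p s) ` P))" using dd_eq by (rule ext)
  have f_le: "f p s \<le> dd s" if "p \<in> P" for p s
    unfolding dd_eq using finP that by (intro Max_ge) auto
  have dd_in: "\<exists>p\<in>P. f p s = dd s" for s
  proof -
    have "dd s \<in> (\<lambda>p. f p s) ` P" unfolding dd_eq using finP neP by (intro Max_in) auto
    then show ?thesis by auto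
  qed
  have dd_nonneg: "0 \<le> dd s" for s
  proof -
    obtain p where "p \<in> P" using neP by auto
    moreover have "0 \<le> f p s" by (simp add: f_def)
    ultimately show ?thesis using f_le[of p s] by linarith
  qed
  have M_eq: "Max {norm (v l r) | l. l \<in> {1..N}} = M r" for r
  proof -
    have "{norm (v l r) | l. l \<in> {1..N}} = (\<lambda>l. norm (v l r)) ` I" by (auto simp: I_def)
    then show ?thesis by (simp add: M_def)
  qed
  have M_ge: "norm (v l r) \<le> M r" if "l \<in> I" for l r
    unfolding M_def using finI that by (intro Max_ge) auto
  have M_in: "\<exists>l\<in>I. M r = norm (v l r)" for r
  proof -
    have "M r \<in> (\<lambda>l. norm (v l r)) ` I" unfolding M_def using finI neI by (intro Max_in) auto
    then show ?thesis by auto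
  qed
  have M_nonneg: "0 \<le> M r" for r
  proof -
    obtain l where "l \<in> I" using neI by auto
    then show ?thesis using M_ge[of l r] norm_ge_zero[of "v l r"] by linarith
  qed
  have xd: "(x i has_vector_derivative v i s) (at s)" if "i \<in> I" "0 < s" for i s
  proof -
    have iN: "i \<in> {1..N}" using that(1) unfolding I_def .
    have "(x i has_vector_derivative v i s) (at s within {0..})"
      using x_deriv[OF iN less_imp_le[OF that(2)]] .
    moreover have "s \<in> interior {0..}"
      using that(2) interior_Ici[of "-1" "0::real"] by simp
    then have "at s within {0..} = at s" by (rule at_within_interior)
    ultimately show ?thesis by simp
  qed
  have wd: "(w p has_vector_derivative (v (fst p) s - v (snd p) s)) (at s)" if "p \<in> P" "0 < s" for p s
    unfolding w_def using that xd by (auto simp: P_def intro!: has_vector_derivative_diff)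
  have f_cont_at: "continuous (at s) (f p)" if "p \<in> P" "0 < s" for p s
  proof -
    have "continuous (at s) (w p)" using has_vector_derivative_continuous[OF wd[OF that]] .
    then show ?thesis unfolding f_def by (intro continuous_norm)
  qed
  have f_cont_on: "continuous_on {-\<tau>..} (f p)" if "p \<in> P" for p
    unfolding f_def w_def using that x_cont
    by (auto simp: P_def I_def intro!: continuous_on_norm continuous_on_diff)
  have dd_cont: "continuous_on {-\<tau>..} dd"
    unfolding dd_fun using finP neP f_cont_on by (intro continuous_on_Max_fin) auto
  have M_cont: "continuous_on {0..} M"
    unfolding M_def using finI neI v_cont by (intro continuous_on_Max_fin continuous_on_norm) (auto simp: I_def)
  define Dp where "Dp = (\<lambda>p s. sgn (w p s) \<bullet> (v (fst p) s - v (snd p) s))"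
  have fd: "(f p has_real_derivative Dp p s) (at s)" if "p \<in> P" "0 < s" "w p s \<noteq> 0" for p s
  proof -
    have "((\<lambda>s. norm (w p s)) has_derivative (\<lambda>h. sgn (w p s) \<bullet> (h *\<^sub>R (v (fst p) s - v (snd p) s)))) (at s)"
      using has_derivative_compose[OF wd[OF that(1,2), unfolded has_vector_derivative_def] has_derivative_norm[OF that(3)]]
      by (simp add: inner_commute)
    moreover have "(\<lambda>h. sgn (w p s) \<bullet> (h *\<^sub>R (v (fst p) s - v (snd p) s))) = (*) (Dp p s)"
      by (auto simp: fun_eq_iff Dp_def)
    ultimately show ?thesis unfolding has_field_derivative_def f_def by simp
  qed
  define Z where "Z = {s. 0 < s \<and> dd s = 0}"
  define B0 where "B0 = {t \<in> Z. \<not> t islimpt Z}"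
  define Bpq where "Bpq = (\<lambda>pq. {t. 0 < t \<and> w (fst pq) t \<noteq> 0 \<and> w (snd pq) t \<noteq> 0 \<and>
      f (fst pq) t = f (snd pq) t \<and> Dp (fst pq) t \<noteq> Dp (snd pq) t})"
  define Bad where "Bad = B0 \<union> (\<Union>pq\<in>P \<times> P. Bpq pq)"
  have cB0: "countable B0"
  proof (rule discrete_countable)
    fix t assume "t \<in> B0"
    then have "\<forall>\<^sub>F s in at t. s \<notin> Z" unfolding B0_def islimpt_iff_eventually by auto
    then show "\<forall>\<^sub>F s in at t. s \<notin> B0" by eventually_elim (auto simp: B0_def)
  qed
  have cBpq: "countable (Bpq pq)" if "pq \<in> P \<times> P" for pq
  proof (rule discrete_countable)
    fix t assume t: "t \<in> Bpq pq"
    obtain p q where pq: "pq = (p, q)" by (cases pq) auto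
    have pP: "p \<in> P" and qP: "q \<in> P" using that pq by auto
    have t': "0 < t" "w p t \<noteq> 0" "w q t \<noteq> 0" "f p t = f q t" "Dp p t \<noteq> Dp q t"
      using t by (auto simp: Bpq_def pq)
    have "((\<lambda>s. f p s - f q s) has_real_derivative (Dp p t - Dp q t)) (at t)"
      using fd[OF pP t'(1,2)] fd[OF qP t'(1,3)] by (rule DERIV_diff)
    then have "\<forall>\<^sub>F s in at t. f p s - f q s \<noteq> 0"
      by (rule isolated_zero) (use t' in auto)
    then show "\<forall>\<^sub>F s in at t. s \<notin> Bpq pq" by eventually_elim (auto simp: Bpq_def pq)
  qed
  have cBad: "countable Bad"
    unfolding Bad_def using cB0 cBpq finP by (intro countable_Un countable_UN) auto
  have diff: "\<exists>D. (dd has_real_derivative D) (at t)" if t: "0 < t" "t \<notin> Bad" for t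
  proof (cases "dd t = 0")
    case True
    then have "t \<in> Z" using t by (simp add: Z_def)
    then have lim: "t islimpt Z" using t by (auto simp: Bad_def B0_def)
    have w0: "w p s = 0" if "p \<in> P" "s \<in> Z \<or> s = t" for p s
    proof -
      have "dd s = 0" using that True by (auto simp: Z_def)
      then have "f p s \<le> 0" using f_le[OF that(1), of s] by simp
      then show ?thesis by (simp add: f_def)
    qed
    have "(f p has_real_derivative 0) (at t)" if "p \<in> P" for p
    proof -
      have "v (fst p) t - v (snd p) t = 0"
        using deriv_zero_on_limpt[OF wd[OF that t(1)] lim] w0 that by auto
      then have "(w p has_vector_derivative 0) (at t)" using wd[OF that t(1)] by simp
      then show ?thesis unfolding f_def using w0[OF that] by (intro norm_deriv_zero) auto
    qed
    then have "(dd has_real_derivative 0) (at t)"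
      unfolding dd_fun using finP neP f_cont_at t(1) by (intro max_has_derivative) auto
    then show ?thesis by blast
  next
    case False
    then have pos: "0 < dd t" using dd_nonneg[of t] by simp
    obtain p0 where p0: "p0 \<in> P" "f p0 t = dd t" using dd_in by blast
    have wp0: "w p0 t \<noteq> 0" using p0 pos by (auto simp: f_def)
    have "(f q has_real_derivative Dp p0 t) (at t)" if q: "q \<in> P" "f q t = dd t" for q
    proof -
      have wq: "w q t \<noteq> 0" using q pos by (auto simp: f_def)
      have "t \<notin> Bpq (p0, q)" using t p0(1) q(1) by (auto simp: Bad_def)
      then have "Dp q t = Dp p0 t" using t(1) wp0 wq p0(2) q(2) by (auto simp: Bpq_def)
      then show ?thesis using fd[OF q(1) t(1) wq] by simp
    qed
    then have "(dd has_real_derivative Dp p0 t) (at t)"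
      unfolding dd_fun using finP neP f_cont_at t(1) dd_eq by (intro max_has_derivative) auto
    then show ?thesis by blast
  qed
  define am where "am = (\<lambda>t. coupling_min \<psi> N \<sigma> \<tau> x t)"
  define cp where "cp = (\<lambda>i j t. coupling \<psi> N \<sigma> \<tau> x i j t)"
  have N1: "0 < real N - 1" using N by simp
  have cp_nonneg: "0 \<le> cp i j s" for i j s
    unfolding cp_def coupling_def using psi_pos[of "norm (x i (s - \<sigma>) - x j (s - \<tau>))"] N1 by simp
  have cp_le: "cp i j s \<le> 1 / (real N - 1)" for i j s
    unfolding cp_def coupling_def using psi_le1[of "norm (x i (s - \<sigma>) - x j (s - \<tau>))"] N1
    by (simp add: divide_right_mono)
  have cp_sum: "(\<Sum>k\<in>I - {i}. cp i k s) \<le> 1" if "i \<in> I" for i s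
  proof -
    have "(\<Sum>k\<in>I - {i}. cp i k s) \<le> of_nat (card (I - {i})) * (1 / (real N - 1))"
      using cp_le by (intro sum_bounded_above) auto
    also have "card (I - {i}) = N - 1" using that finI cardI by (simp add: card_Diff_singleton)
    also have "real (N - 1) = real N - 1" using N by (simp add: of_nat_diff)
    finally show ?thesis using N1 by simp
  qed
  have am_le: "am t \<le> cp i j t" if "i \<in> I" "j \<in> I" for i j t
  proof -
    have fin: "finite {coupling \<psi> N \<sigma> \<tau> x i j t | i j. i \<in> {1..N} \<and> j \<in> {1..N}}"
      by (rule finite_image_set2) auto
    show ?thesis unfolding am_def coupling_min_def cp_def using that fin
      by (intro Min_le) (auto simp: I_def)
  qed
  have M_int: "M integrable_on {a..b}" if "0 \<le> a" for a b
    using that by (intro integrable_continuous_interval continuous_on_subset[OF M_cont]) auto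
  have xbound: "norm (x i b - x i a) \<le> integral {a..b} M" if "i \<in> I" "0 \<le> a" "a \<le> b" for i a b
  proof -
    have iN: "i \<in> {1..N}" using that(1) unfolding I_def .
    have hi: "(v i has_integral (x i b - x i a)) {a..b}"
    proof (rule fundamental_theorem_of_calculus[OF that(3)])
      fix s assume s: "s \<in> {a..b}"
      then have "(x i has_vector_derivative v i s) (at s within {0..})"
        using x_deriv[OF iN] that(2) by auto
      then show "(x i has_vector_derivative v i s) (at s within {a..b})"
        by (rule has_vector_derivative_within_subset) (use that(2) in auto)
    qed
    then have vint: "v i integrable_on {a..b}" by (rule has_integral_integrable)
    have "norm (integral {a..b} (v i)) \<le> integral {a..b} M"
      by (rule Henstock_Kurzweil_Integration.integral_norm_bound_integral[OF vint M_int[OF that(2)]])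
        (rule M_ge[OF that(1)])
    moreover have "integral {a..b} (v i) = x i b - x i a" using hi by (rule integral_unique)
    ultimately show ?thesis by simp
  qed
  have Mmono: "integral {a..b} M \<le> integral {c..e} M" if "0 \<le> c" "c \<le> a" "b \<le> e" for a b c e
    using that by (intro integral_subset_le M_int M_nonneg ballI) auto
  have ineq: "D \<le> 4 * integral {t - \<tau>..t} (\<lambda>s. dd (s - \<tau>)) + 4 * \<tau> * integral {t - 2 * \<tau>..t} M
                 - real N * am t * dd t"
    if t: "2 * \<tau> < t" and D: "(dd has_real_derivative D) (at t)" for t D
  proof -
    have t0: "0 < t - 2 * \<tau>" using t by simp
    have t00: "0 < t" using t0 tau by linarith
    define K where "K = integral {t - 2 * \<tau>..t} M"
    define E where "E = integral {t - \<tau>..t} M"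
    have K0: "0 \<le> K" unfolding K_def using t0
      by (intro Henstock_Kurzweil_Integration.integral_nonneg M_int M_nonneg) auto
    have E0: "0 \<le> E" unfolding E_def using t0 tau
      by (intro Henstock_Kurzweil_Integration.integral_nonneg M_int M_nonneg) auto
    have ddc: "continuous_on {t - \<tau>..t} (\<lambda>s. dd (s - \<tau>))"
      by (rule continuous_on_compose2[OF dd_cont]) (use t0 in \<open>auto intro!: continuous_intros\<close>)
    have ddi: "(\<lambda>s. dd (s - \<tau>)) integrable_on {t - \<tau>..t}" using ddc by (rule integrable_continuous_interval)
    have Mb: "M r \<le> dd (r - \<tau>) + K" if r: "t - \<tau> \<le> r" "r \<le> t" for r
    proof -
      have r0: "0 < r" "0 < r - \<tau>" using r t0 tau by linarith+
      obtain l where l: "l \<in> I" "M r = norm (v l r)" using M_in by blast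
      have lN: "l \<in> {1..N}" using l(1) unfolding I_def .
      have "norm (v l r) \<le> (\<Sum>k\<in>I - {l}. norm (cp l k r *\<^sub>R (x k (r - \<tau>) - x l (r - \<sigma>))))"
        unfolding ode[OF lN r0(1)] cp_def I_def by (rule norm_sum)
      also have "\<dots> \<le> (\<Sum>k\<in>I - {l}. cp l k r * (dd (r - \<tau>) + K))"
      proof (rule sum_mono)
        fix k assume k: "k \<in> I - {l}"
        have e1: "norm (x k (r - \<tau>) - x l (r - \<tau>)) \<le> dd (r - \<tau>)"
          using f_le[of "(k, l)" "r - \<tau>"] k l(1) by (auto simp: f_def w_def P_def)
        have "norm (x l (r - \<sigma>) - x l (r - \<tau>)) \<le> integral {r - \<tau>..r - \<sigma>} M"
          using xbound[OF l(1), of "r - \<tau>" "r - \<sigma>"] r0 sig by auto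
        also have "\<dots> \<le> K" unfolding K_def using r t0 sig by (intro Mmono) auto
        finally have e2: "norm (x l (r - \<tau>) - x l (r - \<sigma>)) \<le> K" by (simp add: norm_minus_commute)
        have "norm (x k (r - \<tau>) - x l (r - \<sigma>)) \<le> dd (r - \<tau>) + K"
          by (rule norm_diff_triangle_le[OF e1 e2])
        then show "norm (cp l k r *\<^sub>R (x k (r - \<tau>) - x l (r - \<sigma>))) \<le> cp l k r * (dd (r - \<tau>) + K)"
          using cp_nonneg[of l k r] by (simp add: abs_of_nonneg mult_left_mono)
      qed
      also have "\<dots> = (\<Sum>k\<in>I - {l}. cp l k r) * (dd (r - \<tau>) + K)" by (simp add: sum_distrib_right)
      also have "\<dots> \<le> 1 * (dd (r - \<tau>) + K)"
        using cp_sum[OF l(1)] dd_nonneg[of "r - \<tau>"] K0 by (intro mult_right_mono) auto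
      finally show ?thesis using l(2) by simp
    qed
    have Eb: "E \<le> integral {t - \<tau>..t} (\<lambda>s. dd (s - \<tau>)) + \<tau> * K"
    proof -
      have "E \<le> integral {t - \<tau>..t} (\<lambda>s. dd (s - \<tau>) + K)"
        unfolding E_def using Mb t0 tau ddi
        by (intro Henstock_Kurzweil_Integration.integral_le M_int integrable_add integrable_const_ivl) auto
      also have "\<dots> = integral {t - \<tau>..t} (\<lambda>s. dd (s - \<tau>)) + integral {t - \<tau>..t} (\<lambda>s. K)"
        using ddi by (intro Henstock_Kurzweil_Integration.integral_add integrable_const_ivl)
      also have "integral {t - \<tau>..t} (\<lambda>s. K) = \<tau> * K" using tau by (simp add: content_real)
      finally show ?thesis .
    qed
    have main: "D \<le> 4 * E - real N * am t * dd t"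
    proof (cases "dd t = 0")
      case True
      have "D = 0"
        by (rule DERIV_local_min[OF D, of 1]) (auto simp: True dd_nonneg)
      then show ?thesis using True E0 by simp
    next
      case False
      then have pos: "0 < dd t" using dd_nonneg[of t] by simp
      obtain p where p: "p \<in> P" "f p t = dd t" using dd_in by blast
      obtain i j where pij: "p = (i, j)" by (cases p) auto
      have ij: "i \<in> I" "j \<in> I" using p(1) pij by (auto simp: P_def)
      have wne: "w p t \<noteq> 0" using p pos by (auto simp: f_def)
      have "((\<lambda>s. dd s - f p s) has_real_derivative (D - Dp p t)) (at t)"
        using D fd[OF p(1) t00 wne] by (rule DERIV_diff)
      then have "D - Dp p t = 0"
        by (rule DERIV_local_min[of _ _ _ 1]) (auto simp: p(2) f_le[OF p(1)])
      then have DD: "D = Dp p t" by simp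
      define e where "e = sgn (w p t)"
      have wij: "w p t = x i t - x j t" by (simp add: w_def pij)
      have ne1: "norm e = 1" using wne by (simp add: e_def norm_sgn)
      have ew0: "e \<bullet> w p t = norm (w p t)"
      proof -
        have "e \<bullet> w p t = (w p t \<bullet> w p t) / norm (w p t)"
          by (simp add: e_def sgn_div_norm inner_scaleR_left divide_inverse_commute)
        also have "\<dots> = norm (w p t)" using wne by (simp add: dot_square_norm power2_eq_square)
        finally show ?thesis .
      qed
      have ew: "e \<bullet> (x i t - x j t) = dd t" using ew0 p(2) wij by (simp add: f_def)
      have einn: "e \<bullet> c = (w p t \<bullet> c) / norm (w p t)" for c
        by (simp add: e_def sgn_div_norm inner_scaleR_left divide_inverse_commute)
      have npos: "0 < norm (w p t)" using wne by simp
      define y where "y = (\<lambda>k. e \<bullet> (x k t - x i t))"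
      define z where "z = (\<lambda>k. e \<bullet> ((x k (t - \<tau>) - x k t) - (x i (t - \<sigma>) - x i t)))"
      define y' where "y' = (\<lambda>k. - (e \<bullet> (x k t - x j t)))"
      define z' where "z' = (\<lambda>k. - (e \<bullet> ((x k (t - \<tau>) - x k t) - (x j (t - \<sigma>) - x j t))))"
      have zb: "\<bar>e \<bullet> ((x k (t - \<tau>) - x k t) - (x m (t - \<sigma>) - x m t))\<bar> \<le> 2 * E"
        if "k \<in> I" "m \<in> I" for k m
      proof -
        have "norm (x k t - x k (t - \<tau>)) \<le> E" unfolding E_def
          using xbound[OF that(1), of "t - \<tau>" t] t0 tau by auto
        then have a1: "norm (x k (t - \<tau>) - x k t) \<le> E" by (simp add: norm_minus_commute)
        have "norm (x m t - x m (t - \<sigma>)) \<le> integral {t - \<sigma>..t} M"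
          using xbound[OF that(2), of "t - \<sigma>" t] t0 sig by auto
        also have "\<dots> \<le> E" unfolding E_def using t0 sig tau by (intro Mmono) auto
        finally have a2: "norm (x m (t - \<sigma>) - x m t) \<le> E" by (simp add: norm_minus_commute)
        have "\<bar>e \<bullet> ((x k (t - \<tau>) - x k t) - (x m (t - \<sigma>) - x m t))\<bar>
              \<le> norm e * norm ((x k (t - \<tau>) - x k t) - (x m (t - \<sigma>) - x m t))"
          by (rule Cauchy_Schwarz_ineq2)
        also have "\<dots> \<le> norm (x k (t - \<tau>) - x k t) + norm (x m (t - \<sigma>) - x m t)"
          unfolding ne1 mult_1 by (rule norm_triangle_ineq4)
        also have "\<dots> \<le> 2 * E" using a1 a2 by simp
        finally show ?thesis .
      qed
      have y_le: "y k \<le> 0" if "k \<in> I" for k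
      proof -
        have "norm (x k t - x j t) \<le> norm (x i t - x j t)"
          using f_le[of "(k, j)" t] that ij p(2) wij by (auto simp: f_def w_def P_def)
        then have "(x k t - x i t) \<bullet> (x i t - x j t) \<le> 0" by (rule inner_sign1)
        then have "w p t \<bullet> (x k t - x i t) \<le> 0" using wij by (simp add: inner_commute)
        then show ?thesis unfolding y_def einn using npos by (simp add: divide_nonpos_pos)
      qed
      have y'_le: "y' k \<le> 0" if "k \<in> I" for k
      proof -
        have "norm (x k t - x i t) \<le> norm (x i t - x j t)"
          using f_le[of "(k, i)" t] that ij p(2) wij by (auto simp: f_def w_def P_def)
        then have "(x k t - x j t) \<bullet> (x i t - x j t) \<ge> 0" by (rule inner_sign2)
        then have "w p t \<bullet> (x k t - x j t) \<ge> 0" using wij by (simp add: inner_commute)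
        then show ?thesis unfolding y'_def einn using npos by simp
      qed
      have iN: "i \<in> {1..N}" using ij(1) unfolding I_def .
      have jN: "j \<in> {1..N}" using ij(2) unfolding I_def .
      have vi: "e \<bullet> v i t = (\<Sum>k\<in>I - {i}. cp i k t * (y k + z k))"
      proof -
        have "e \<bullet> v i t = (\<Sum>k\<in>I - {i}. cp i k t * (e \<bullet> (x k (t - \<tau>) - x i (t - \<sigma>))))"
          unfolding ode[OF iN t00] cp_def I_def by (simp add: inner_sum_right)
        also have "\<dots> = (\<Sum>k\<in>I - {i}. cp i k t * (y k + z k))"
        proof (rule sum.cong[OF refl])
          fix k
          have "e \<bullet> (x k (t - \<tau>) - x i (t - \<sigma>)) = y k + z k"
            unfolding y_def z_def by (simp add: inner_diff_right algebra_simps)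
          then show "cp i k t * (e \<bullet> (x k (t - \<tau>) - x i (t - \<sigma>))) = cp i k t * (y k + z k)" by simp
        qed
        finally show ?thesis .
      qed
      have vj: "- (e \<bullet> v j t) = (\<Sum>k\<in>I - {j}. cp j k t * (y' k + z' k))"
      proof -
        have "- (e \<bullet> v j t) = (\<Sum>k\<in>I - {j}. cp j k t * (- (e \<bullet> (x k (t - \<tau>) - x j (t - \<sigma>)))))"
          unfolding ode[OF jN t00] cp_def I_def by (simp add: inner_sum_right sum_negf)
        also have "\<dots> = (\<Sum>k\<in>I - {j}. cp j k t * (y' k + z' k))"
        proof (rule sum.cong[OF refl])
          fix k
          have "- (e \<bullet> (x k (t - \<tau>) - x j (t - \<sigma>))) = y' k + z' k"
            unfolding y'_def z'_def by (simp add: inner_diff_right algebra_simps)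
          then show "cp j k t * (- (e \<bullet> (x k (t - \<tau>) - x j (t - \<sigma>)))) = cp j k t * (y' k + z' k)" by simp
        qed
        finally show ?thesis .
      qed
      have E2: "0 \<le> 2 * E" using E0 by simp
      have Ai: "(\<Sum>k\<in>I - {i}. cp i k t * (y k + z k)) \<le> am t * sum y (I - {i}) + 2 * E"
      proof (rule agent_bound[OF _ _ _ _ _ _ E2])
        show "z k \<le> 2 * E" if "k \<in> I - {i}" for k
          using zb[of k i] that ij unfolding z_def by auto
      qed (use finI am_le ij cp_nonneg cp_sum y_le in auto)
      have Aj: "(\<Sum>k\<in>I - {j}. cp j k t * (y' k + z' k)) \<le> am t * sum y' (I - {j}) + 2 * E"
      proof (rule agent_bound[OF _ _ _ _ _ _ E2])
        show "z' k \<le> 2 * E" if "k \<in> I - {j}" for k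
          using zb[of k j] that ij unfolding z'_def by auto
      qed (use finI am_le ij cp_nonneg cp_sum y'_le in auto)
      have sy: "sum y (I - {i}) = sum y I" using finI ij by (simp add: sum_diff1 y_def)
      have sy': "sum y' (I - {j}) = sum y' I" using finI ij by (simp add: sum_diff1 y'_def)
      have syy: "sum y I + sum y' I = - (real N * dd t)"
      proof -
        have "sum y I + sum y' I = (\<Sum>k\<in>I. - dd t)"
          unfolding sum.distrib[symmetric]
        proof (rule sum.cong[OF refl])
          fix k show "y k + y' k = - dd t"
            using ew unfolding y_def y'_def by (simp add: inner_diff_right)
        qed
        then show ?thesis using cardI by simp
      qed
      have "D = e \<bullet> v i t + (- (e \<bullet> v j t))"
        unfolding DD Dp_def e_def by (simp add: inner_diff_right pij)
      also have "\<dots> \<le> am t * sum y I + 2 * E + (am t * sum y' I + 2 * E)"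
        using Ai Aj unfolding vi[symmetric] vj[symmetric] sy sy' by linarith
      also have "\<dots> = am t * (sum y I + sum y' I) + 4 * E" by (simp add: algebra_simps)
      also have "\<dots> = 4 * E - real N * am t * dd t" unfolding syy by (simp add: algebra_simps)
      finally show ?thesis .
    qed
    have "4 * E \<le> 4 * integral {t - \<tau>..t} (\<lambda>s. dd (s - \<tau>)) + 4 * \<tau> * K" using Eb by simp
    then show ?thesis using main unfolding K_def by simp
  qed
  have Mfun: "(\<lambda>r. Max {norm (v l r) | l. l \<in> {1..N}}) = M" by (rule ext) (rule M_eq)
  have key: "2 * \<tau> < t \<longrightarrow> (\<exists>D. (dd has_real_derivative D) (at t) \<and>
              D \<le> 4 * integral {t - \<tau>..t} (\<lambda>s. dd (s - \<tau>))
                   + 4 * \<tau> * integral {t - 2 * \<tau>..t} M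
                   - real N * coupling_min \<psi> N \<sigma> \<tau> x t * dd t)" if nb: "t \<notin> Bad" for t
  proof
    assume t: "2 * \<tau> < t"
    then have "0 < t" using tau by linarith
    then obtain D where D: "(dd has_real_derivative D) (at t)" using diff nb by blast
    show "\<exists>D. (dd has_real_derivative D) (at t) \<and>
              D \<le> 4 * integral {t - \<tau>..t} (\<lambda>s. dd (s - \<tau>))
                   + 4 * \<tau> * integral {t - 2 * \<tau>..t} M
                   - real N * coupling_min \<psi> N \<sigma> \<tau> x t * dd t"
      using D ineq[OF t D] unfolding am_def by blast
  qed
  show ?thesis
    unfolding dd_def[symmetric] Mfun
    by (rule AE_I'[OF countable_imp_null_set_lborel[OF cBad]]) (use key in blast)
qed

end
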